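(* Let $m\ge1$ be a fixed integer. For the random key graph $G(n,X_n,Y_n)$ with $X_n\ge2$ for all large $n$ and edge probability satisfying $q_n\sim\frac{\ln n}{n}$, we have $$\mathbb{E}\Big[\exp\Big(-\frac{nq_n}{X_n}\Big|\bigcup_{i=1}^m S_i\Big|\Big)\Big]\le e^{-mnq_n}\,[1+o(1)]\quad(n\to\infty).$$
   Context: The random key graph $G(n,X_n,Y_n)$ (with $1\le X_n\le Y_n$ integers depending on $n$) has node set $\{v_1,\dots,v_n\}$; each node $v_i$ is independently assigned a set $S_i$ of $X_n$ distinct objects chosen uniformly at random among all $X_n$-element subsets of a pool of $Y_n$ objects; an undirected edge joins $v_i$ and $v_j$ ($i\ne j$) iff $S_i\cap S_j\neq\emptyset$. The edge probability is $q_n=1-\binom{Y_n-X_n}{X_n}/\binom{Y_n}{X_n}$. *)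

theory Defs
  imports "HOL-Probability.Probability" "HOL-Library.Landau_Symbols"
begin

text \<open>Key pool of size Y is modelled as {..<Y}; a key ring is a uniformly random
  X-element subset of the pool.\<close>
definition key_ring_pmf :: "nat \<Rightarrow> nat \<Rightarrow> nat set pmf" where
  "key_ring_pmf X Y = pmf_of_set {S. S \<subseteq> {..<Y} \<and> card S = X}"

definition key_rings_pmf :: "nat \<Rightarrow> nat \<Rightarrow> nat \<Rightarrow> (nat \<Rightarrow> nat set) pmf" where
  "key_rings_pmf m X Y = Pi_pmf {1..m} {} (\<lambda>_. key_ring_pmf X Y)"

definition edge_prob :: "nat \<Rightarrow> nat \<Rightarrow> real" where
  "edge_prob X Y = 1 - real ((Y - X) choose X) / real (Y choose X)"

end

theory Submission
  imports Defs "HOL-Real_Asymp.Real_Asymp"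
begin

lemma binom_ratio:
  "k \<le> X \<Longrightarrow> X \<le> Y \<Longrightarrow> real ((Y-k) choose (X-k)) \<le> real (Y choose X) * (real X / real Y)^k"
proof (induction k arbitrary: X Y)
  case 0 then show ?case by simp
next
  case (Suc k)
  then obtain X' Y' where XY: "X = Suc X'" "Y = Suc Y'"
    by (metis Suc_le_D le_trans)
  with Suc.prems have kX: "k \<le> X'" "X' \<le> Y'" by auto
  have "real ((Y-Suc k) choose (X-Suc k)) = real ((Y'-k) choose (X'-k))" using XY by simp
  also have "\<dots> \<le> real (Y' choose X') * (real X' / real Y')^k" using Suc.IH kX by blast
  also have "\<dots> \<le> real (Y' choose X') * (real X / real Y)^k"
  proof -
    have "real X' / real Y' \<le> real X / real Y"
    proof (cases "Y' = 0")
      case True then show ?thesis by simp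
    next
      case False
      have "real X' * real Y \<le> real X * real Y'" using XY kX by (simp add: algebra_simps)
      then show ?thesis using False XY by (simp add: divide_simps)
    qed
    then show ?thesis by (intro mult_left_mono power_mono) auto
  qed
  also have "\<dots> = real (Y choose X) * (real X / real Y)^(Suc k)"
  proof -
    have e: "real (Suc Y') * real (Y' choose X') = real (Suc Y' choose Suc X') * real (Suc X')"
      using Suc_times_binomial_eq[of Y' X'] by (metis of_nat_mult)
    have "real (Y choose X) * (real X / real Y) = real (Y' choose X')"
      using e XY by (simp add: divide_simps del: of_nat_Suc) (simp add: algebra_simps)
    moreover have "real (Y choose X) * (real X / real Y)^(Suc k) = (real (Y choose X) * (real X / real Y)) * (real X / real Y)^k"
      by (simp only: power_Suc mult.assoc)
    ultimately show ?thesis by simp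
  qed
  finally show ?case .
qed

lemma card_contain:
  assumes "A \<subseteq> {..<Y}" "X \<le> Y"
  shows "real (card {S. S \<subseteq> {..<Y} \<and> card S = X \<and> A \<subseteq> S}) \<le> real (Y choose X) * (real X / real Y)^card A"
proof (cases "card A \<le> X")
  case False
  have "{S. S \<subseteq> {..<Y} \<and> card S = X \<and> A \<subseteq> S} = {}"
  proof -
    have "\<not> (S \<subseteq> {..<Y} \<and> card S = X \<and> A \<subseteq> S)" for S
    proof
      assume S: "S \<subseteq> {..<Y} \<and> card S = X \<and> A \<subseteq> S"
      then have "card A \<le> card S" by (meson card_mono finite_lessThan finite_subset)
      then show False using False S by simp
    qed
    then show ?thesis by blast
  qed
  then have c0: "card {S. S \<subseteq> {..<Y} \<and> card S = X \<and> A \<subseteq> S} = 0" by (simp only: card.empty)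
  show ?thesis unfolding c0 by simp
next
  case True
  have fA: "finite A" using assms(1) finite_subset by blast
  have sub: "{S. S \<subseteq> {..<Y} \<and> card S = X \<and> A \<subseteq> S} \<subseteq> (\<lambda>B. B \<union> A) ` {B. B \<subseteq> {..<Y} - A \<and> card B = X - card A}"
  proof
    fix S assume S: "S \<in> {S. S \<subseteq> {..<Y} \<and> card S = X \<and> A \<subseteq> S}"
    then have "finite S" using finite_subset by blast
    then have "card (S - A) = X - card A" using S by (simp add: card_Diff_subset fA)
    moreover have "S = (S - A) \<union> A" using S by blast
    ultimately show "S \<in> (\<lambda>B. B \<union> A) ` {B. B \<subseteq> {..<Y} - A \<and> card B = X - card A}"
      using S by blast
  qed
  have "card {S. S \<subseteq> {..<Y} \<and> card S = X \<and> A \<subseteq> S} \<le> card ((\<lambda>B. B \<union> A) ` {B. B \<subseteq> {..<Y} - A \<and> card B = X - card A})"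
    by (rule card_mono[OF _ sub]) (auto intro!: finite_imageI)
  also have "\<dots> \<le> card {B. B \<subseteq> {..<Y} - A \<and> card B = X - card A}" by (rule card_image_le) auto
  also have "\<dots> = (Y - card A) choose (X - card A)"
    using n_subsets[of "{..<Y} - A" "X - card A"] assms(1) fA by (simp add: card_Diff_subset)
  finally have "real (card {S. S \<subseteq> {..<Y} \<and> card S = X \<and> A \<subseteq> S}) \<le> real ((Y - card A) choose (X - card A))"
    by linarith
  also have "\<dots> \<le> real (Y choose X) * (real X / real Y)^card A"
    using binom_ratio True assms by blast
  finally show ?thesis .
qed

lemma pow_sum_card:
  fixes c :: real
  assumes "finite B"
  shows "(1 + c)^card B = (\<Sum>A\<in>Pow B. c^card A)"
proof -
  have "(\<Prod>x\<in>B. c + 1) = (\<Sum>A\<in>Pow B. (\<Prod>x\<in>A. c) * (\<Prod>x\<in>B-A. 1))"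
    by (rule prod_add[OF assms])
  then show ?thesis by (simp add: add.commute)
qed

lemma step_bound:
  assumes "1 \<le> X" "X \<le> Y" "finite T" "0 \<le> a"
  shows "measure_pmf.expectation (key_ring_pmf X Y) (\<lambda>S. exp (a * real (card (S \<inter> T))))
    \<le> exp (real (card T) * (exp a - 1) * real X / real Y)"
proof -
  define \<Omega> where "\<Omega> = {S. S \<subseteq> {..<Y} \<and> card S = X}"
  define T' where "T' = T \<inter> {..<Y}"
  define c where "c = exp a - 1"
  have c0: "0 \<le> c" using assms(4) by (simp add: c_def)
  have fO: "finite \<Omega>" unfolding \<Omega>_def
    by (rule finite_subset[of _ "Pow {..<Y}"]) auto
  have cO: "card \<Omega> = Y choose X" unfolding \<Omega>_def using n_subsets[of "{..<Y}" X] by simp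
  have NO: "0 < real (Y choose X)" using assms(2) by simp
  then have neO: "\<Omega> \<noteq> {}" using cO by auto
  have fT': "finite T'" by (simp add: T'_def)
  have E: "measure_pmf.expectation (key_ring_pmf X Y) (\<lambda>S. exp (a * real (card (S \<inter> T))))
     = (\<Sum>S\<in>\<Omega>. exp (a * real (card (S \<inter> T)))) / real (Y choose X)"
    unfolding key_ring_pmf_def \<Omega>_def[symmetric] using integral_pmf_of_set[OF neO fO] cO by simp
  have "(\<Sum>S\<in>\<Omega>. exp (a * real (card (S \<inter> T)))) = (\<Sum>S\<in>\<Omega>. \<Sum>A\<in>Pow T'. if A \<subseteq> S then c^card A else 0)"
  proof (rule sum.cong[OF refl])
    fix S assume S: "S \<in> \<Omega>"
    have ST: "S \<inter> T = S \<inter> T'" using S by (auto simp: \<Omega>_def T'_def)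
    have "exp (a * real (card (S \<inter> T))) = (1 + c)^card (S \<inter> T')"
      by (simp add: ST c_def exp_of_nat_mult[symmetric] mult.commute)
    also have "\<dots> = (\<Sum>A\<in>Pow (S \<inter> T'). c^card A)" by (rule pow_sum_card) (simp add: fT')
    also have "Pow (S \<inter> T') = {A \<in> Pow T'. A \<subseteq> S}" by auto
    also have "(\<Sum>A\<in>{A \<in> Pow T'. A \<subseteq> S}. c^card A) = (\<Sum>A\<in>Pow T'. if A \<subseteq> S then c^card A else 0)"
      by (rule sum.inter_filter) (simp add: fT')
    finally show "exp (a * real (card (S \<inter> T))) = (\<Sum>A\<in>Pow T'. if A \<subseteq> S then c^card A else 0)" .
  qed
  also have "\<dots> = (\<Sum>A\<in>Pow T'. \<Sum>S\<in>\<Omega>. if A \<subseteq> S then c^card A else 0)"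
    by (rule sum.swap)
  also have "\<dots> = (\<Sum>A\<in>Pow T'. c^card A * real (card {S. S \<subseteq> {..<Y} \<and> card S = X \<and> A \<subseteq> S}))"
  proof (rule sum.cong[OF refl])
    fix A
    have "(\<Sum>S\<in>\<Omega>. if A \<subseteq> S then c^card A else 0) = (\<Sum>S\<in>{S\<in>\<Omega>. A \<subseteq> S}. c^card A)"
      by (rule sum.inter_filter[symmetric]) (rule fO)
    also have "{S\<in>\<Omega>. A \<subseteq> S} = {S. S \<subseteq> {..<Y} \<and> card S = X \<and> A \<subseteq> S}" by (auto simp: \<Omega>_def)
    finally show "(\<Sum>S\<in>\<Omega>. if A \<subseteq> S then c^card A else 0) = c^card A * real (card {S. S \<subseteq> {..<Y} \<and> card S = X \<and> A \<subseteq> S})"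
      by (simp add: mult.commute)
  qed
  also have "\<dots> \<le> (\<Sum>A\<in>Pow T'. c^card A * (real (Y choose X) * (real X / real Y)^card A))"
  proof (rule sum_mono)
    fix A assume "A \<in> Pow T'"
    then have "A \<subseteq> {..<Y}" by (auto simp: T'_def)
    from card_contain[OF this assms(2)] show "c^card A * real (card {S. S \<subseteq> {..<Y} \<and> card S = X \<and> A \<subseteq> S}) \<le> c^card A * (real (Y choose X) * (real X / real Y)^card A)"
      by (intro mult_left_mono) (auto simp: c0)
  qed
  also have "\<dots> = real (Y choose X) * (\<Sum>A\<in>Pow T'. (c * (real X / real Y))^card A)"
    unfolding sum_distrib_left by (intro sum.cong refl) (simp only: power_mult_distrib mult.assoc mult.left_commute)
  also have "\<dots> = real (Y choose X) * (1 + c * (real X / real Y))^card T'"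
    using pow_sum_card[OF fT', of "c * (real X / real Y)"] by simp
  finally have S: "(\<Sum>S\<in>\<Omega>. exp (a * real (card (S \<inter> T)))) \<le> real (Y choose X) * (1 + c * (real X / real Y))^card T'" .
  have "(1 + c * (real X / real Y))^card T' \<le> exp (c * (real X / real Y)) ^ card T'"
    by (rule power_mono) (auto simp: c0 add.commute)
  also have "\<dots> = exp (real (card T') * (c * (real X / real Y)))" by (rule exp_of_nat_mult[symmetric])
  also have "\<dots> \<le> exp (real (card T) * (c * (real X / real Y)))"
  proof -
    have "card T' \<le> card T" unfolding T'_def by (rule card_mono[OF assms(3)]) auto
    then show ?thesis by (intro exp_mono mult_right_mono) (auto simp: c0)
  qed
  finally have P: "(1 + c * (real X / real Y))^card T' \<le> exp (real (card T) * (c * (real X / real Y)))" .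
  have "(\<Sum>S\<in>\<Omega>. exp (a * real (card (S \<inter> T)))) \<le> real (Y choose X) * exp (real (card T) * (c * (real X / real Y)))"
    using S mult_left_mono[OF P, of "real (Y choose X)"] NO by linarith
  then have "(\<Sum>S\<in>\<Omega>. exp (a * real (card (S \<inter> T)))) / real (Y choose X) \<le> exp (real (card T) * (c * (real X / real Y)))"
    using NO by (simp add: pos_divide_le_eq mult.commute)
  then show ?thesis unfolding E by (simp add: c_def mult.assoc)
qed

lemma pair_exp:
  fixes f :: "'a \<times> 'b \<Rightarrow> real"
  assumes fp: "finite (set_pmf p)" and fq: "finite (set_pmf q)"
  shows "measure_pmf.expectation (pair_pmf p q) f
     = measure_pmf.expectation q (\<lambda>y. measure_pmf.expectation p (\<lambda>x. f (x, y)))"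
proof -
  have "measure_pmf.expectation (pair_pmf p q) f = (\<Sum>z\<in>set_pmf p \<times> set_pmf q. f z * pmf (pair_pmf p q) z)"
    by (rule integral_measure_pmf_real) (use fp fq in auto)
  also have "\<dots> = (\<Sum>x\<in>set_pmf p. \<Sum>y\<in>set_pmf q. f (x,y) * (pmf p x * pmf q y))"
    by (simp add: sum.cartesian_product) (intro sum.cong refl, auto simp: pmf_pair)
  also have "\<dots> = (\<Sum>y\<in>set_pmf q. \<Sum>x\<in>set_pmf p. f (x,y) * (pmf p x * pmf q y))"
    by (rule sum.swap)
  also have "\<dots> = (\<Sum>y\<in>set_pmf q. (\<Sum>x\<in>set_pmf p. f (x,y) * pmf p x) * pmf q y)"
    by (simp add: sum_distrib_right mult.assoc)
  also have "\<dots> = measure_pmf.expectation q (\<lambda>y. measure_pmf.expectation p (\<lambda>x. f (x, y)))"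
  proof -
    have "measure_pmf.expectation q (\<lambda>y. measure_pmf.expectation p (\<lambda>x. f (x, y)))
       = (\<Sum>y\<in>set_pmf q. measure_pmf.expectation p (\<lambda>x. f (x, y)) * pmf q y)"
      by (rule integral_measure_pmf_real) (use fq in auto)
    also have "\<dots> = (\<Sum>y\<in>set_pmf q. (\<Sum>x\<in>set_pmf p. f (x,y) * pmf p x) * pmf q y)"
      by (intro sum.cong refl arg_cong2[where f="(*)"] integral_measure_pmf_real) (use fp in auto)
    finally show ?thesis by simp
  qed
  finally show ?thesis .
qed

lemma key_ring_set:
  assumes "X \<le> Y"
  shows "set_pmf (key_ring_pmf X Y) = {S. S \<subseteq> {..<Y} \<and> card S = X}"
    "finite {S. S \<subseteq> {..<Y} \<and> card S = X}"
proof -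
  show f: "finite {S. S \<subseteq> {..<Y} \<and> card S = X}"
    by (rule finite_subset[of _ "Pow {..<Y}"]) auto
  have "card {S. S \<subseteq> {..<Y} \<and> card S = X} = Y choose X" using n_subsets[of "{..<Y}" X] by simp
  then have "{S. S \<subseteq> {..<Y} \<and> card S = X} \<noteq> {}" using assms by (metis card.empty zero_less_binomial_iff less_irrefl)
  then show "set_pmf (key_ring_pmf X Y) = {S. S \<subseteq> {..<Y} \<and> card S = X}"
    unfolding key_ring_pmf_def using f by simp
qed

lemma key_rings_finite:
  assumes "X \<le> Y"
  shows "finite (set_pmf (key_rings_pmf k X Y))"
proof -
  have "set_pmf (key_rings_pmf k X Y) = PiE_dflt {1..k} {} (set_pmf \<circ> (\<lambda>_. key_ring_pmf X Y))"
    unfolding key_rings_pmf_def by (rule set_Pi_pmf) simp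
  moreover have "finite (PiE_dflt {1..k} {} (set_pmf \<circ> (\<lambda>_. key_ring_pmf X Y)))"
    using key_ring_set[OF assms] by (intro finite_PiE_dflt) auto
  ultimately show ?thesis by simp
qed

lemma key_rings_set:
  assumes "X \<le> Y" "f \<in> set_pmf (key_rings_pmf k X Y)" "i \<in> {1..k}"
  shows "f i \<subseteq> {..<Y} \<and> card (f i) = X"
proof -
  have "set_pmf (key_rings_pmf k X Y) = PiE_dflt {1..k} {} (set_pmf \<circ> (\<lambda>_. key_ring_pmf X Y))"
    unfolding key_rings_pmf_def by (rule set_Pi_pmf) simp
  then show ?thesis using assms key_ring_set[OF assms(1)] by (auto simp: PiE_dflt_def)
qed

lemma union_bound:
  assumes X1: "1 \<le> X" and XY: "X \<le> Y" and b0: "0 \<le> b"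
  shows "measure_pmf.expectation (key_rings_pmf k X Y) (\<lambda>S. exp (- b * real (card (\<Union>i\<in>{1..k}. S i))))
    \<le> exp (- b * real k * real X) * exp (real k * (real k * real X) * (exp b - 1) * real X / real Y)"
proof (induction k)
  case 0
  have "key_rings_pmf 0 X Y = return_pmf (\<lambda>_. {})"
    unfolding key_rings_pmf_def by simp
  then show ?case by simp
next
  case (Suc k)
  define D where "D = (exp b - 1) * real X / real Y"
  have D0: "0 \<le> D" using b0 by (simp add: D_def)
  define U where "U = (\<lambda>f::nat \<Rightarrow> nat set. \<Union>i\<in>{1..k}. f i)"
  have ins: "{1..Suc k} = insert (Suc k) {1..k}" by auto
  have KS: "key_rings_pmf (Suc k) X Y = map_pmf (\<lambda>(y,f). f(Suc k := y)) (pair_pmf (key_ring_pmf X Y) (key_rings_pmf k X Y))"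
    unfolding key_rings_pmf_def ins by (rule Pi_pmf_insert) auto
  have un: "(\<Union>i\<in>{1..Suc k}. (f(Suc k := y)) i) = y \<union> U f" for f :: "nat \<Rightarrow> nat set" and y
    unfolding ins U_def by auto
  have fin1: "finite (set_pmf (key_ring_pmf X Y))" using key_ring_set[OF XY] by simp
  have "measure_pmf.expectation (key_rings_pmf (Suc k) X Y) (\<lambda>S. exp (- b * real (card (\<Union>i\<in>{1..Suc k}. S i))))
      = measure_pmf.expectation (pair_pmf (key_ring_pmf X Y) (key_rings_pmf k X Y)) (\<lambda>(y,f). exp (- b * real (card (y \<union> U f))))"
    unfolding KS integral_map_pmf by (simp only: case_prod_unfold un)
  also have "\<dots> = measure_pmf.expectation (key_rings_pmf k X Y) (\<lambda>f. measure_pmf.expectation (key_ring_pmf X Y) (\<lambda>y. exp (- b * real (card (y \<union> U f)))))"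
    by (subst pair_exp[OF fin1 key_rings_finite[OF XY]]) simp
  also have "\<dots> \<le> measure_pmf.expectation (key_rings_pmf k X Y) (\<lambda>f. exp (- b * real (card (U f))) * (exp (- b * real X) * exp (real k * real X * D)))"
  proof (rule integral_mono_AE)
    show "integrable (measure_pmf (key_rings_pmf k X Y)) (\<lambda>f. measure_pmf.expectation (key_ring_pmf X Y) (\<lambda>y. exp (- b * real (card (y \<union> U f)))))"
      by (rule integrable_measure_pmf_finite[OF key_rings_finite[OF XY]])
    show "integrable (measure_pmf (key_rings_pmf k X Y)) (\<lambda>f. exp (- b * real (card (U f))) * (exp (- b * real X) * exp (real k * real X * D)))"
      by (rule integrable_measure_pmf_finite[OF key_rings_finite[OF XY]])
    show "AE f in measure_pmf (key_rings_pmf k X Y). measure_pmf.expectation (key_ring_pmf X Y) (\<lambda>y. exp (- b * real (card (y \<union> U f))))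
        \<le> exp (- b * real (card (U f))) * (exp (- b * real X) * exp (real k * real X * D))"
    proof (rule AE_pmfI)
      fix f assume f: "f \<in> set_pmf (key_rings_pmf k X Y)"
      have fi: "f i \<subseteq> {..<Y} \<and> card (f i) = X" if "i \<in> {1..k}" for i
        using key_rings_set[OF XY f that] .
      have finU: "finite (U f)" unfolding U_def using fi by (meson finite_UN_I finite_atLeastAtMost finite_lessThan finite_subset)
      have cU: "card (U f) \<le> k * X"
      proof -
        have "card (U f) \<le> (\<Sum>i\<in>{1..k}. card (f i))" unfolding U_def by (rule card_UN_le) simp
        also have "\<dots> = k * X" using fi by simp
        finally show ?thesis .
      qed
      have "measure_pmf.expectation (key_ring_pmf X Y) (\<lambda>y. exp (- b * real (card (y \<union> U f))))
          = measure_pmf.expectation (key_ring_pmf X Y) (\<lambda>y. (exp (- b * real (card (U f))) * exp (- b * real X)) * exp (b * real (card (y \<inter> U f))))"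
      proof (rule integral_cong_AE)
        show "AE y in measure_pmf (key_ring_pmf X Y). exp (- b * real (card (y \<union> U f))) = (exp (- b * real (card (U f))) * exp (- b * real X)) * exp (b * real (card (y \<inter> U f)))"
        proof (rule AE_pmfI)
          fix y assume "y \<in> set_pmf (key_ring_pmf X Y)"
          then have y: "y \<subseteq> {..<Y}" "card y = X" using key_ring_set[OF XY] by auto
          then have "finite y" by (meson finite_lessThan finite_subset)
          then have "card (y \<union> U f) + card (y \<inter> U f) = X + card (U f)"
            using card_Un_Int[OF \<open>finite y\<close> finU] y by simp
          then have "real (card (y \<union> U f)) = real (card (U f)) + real X - real (card (y \<inter> U f))" by linarith
          then show "exp (- b * real (card (y \<union> U f))) = (exp (- b * real (card (U f))) * exp (- b * real X)) * exp (b * real (card (y \<inter> U f)))"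
          proof -
            assume h: "real (card (y \<union> U f)) = real (card (U f)) + real X - real (card (y \<inter> U f))"
            then have "- b * real (card (y \<union> U f)) = - b * real (card (U f)) + - b * real X + b * real (card (y \<inter> U f))"
              by (subst h) (simp add: algebra_simps)
            then show ?thesis by (simp only: exp_add)
          qed
        qed
      qed simp_all
      also have "\<dots> = (exp (- b * real (card (U f))) * exp (- b * real X)) * measure_pmf.expectation (key_ring_pmf X Y) (\<lambda>y. exp (b * real (card (y \<inter> U f))))"
        by (rule integral_mult_right_zero)
      also have "\<dots> \<le> (exp (- b * real (card (U f))) * exp (- b * real X)) * exp (real (card (U f)) * (exp b - 1) * real X / real Y)"
        by (intro mult_left_mono step_bound X1 XY finU b0) simp
      also have "\<dots> \<le> (exp (- b * real (card (U f))) * exp (- b * real X)) * exp (real k * real X * D)"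
      proof -
        have "real (card (U f)) * (exp b - 1) * real X / real Y = real (card (U f)) * D" by (simp add: D_def)
        also have "\<dots> \<le> real k * real X * D" using cU D0 by (intro mult_right_mono) (simp_all flip: of_nat_mult)
        finally show ?thesis by (intro mult_left_mono) simp_all
      qed
      finally show "measure_pmf.expectation (key_ring_pmf X Y) (\<lambda>y. exp (- b * real (card (y \<union> U f))))
        \<le> exp (- b * real (card (U f))) * (exp (- b * real X) * exp (real k * real X * D))" by (simp add: mult.assoc)
    qed
  qed
  also have "\<dots> = measure_pmf.expectation (key_rings_pmf k X Y) (\<lambda>f. exp (- b * real (card (U f)))) * (exp (- b * real X) * exp (real k * real X * D))"
    by (rule integral_mult_left_zero)
  also have "\<dots> \<le> (exp (- b * real k * real X) * exp (real k * (real k * real X) * D)) * (exp (- b * real X) * exp (real k * real X * D))"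
    using Suc.IH unfolding U_def D_def by (intro mult_right_mono) (simp_all add: mult.assoc)
  also have "\<dots> \<le> exp (- b * real (Suc k) * real X) * exp (real (Suc k) * (real (Suc k) * real X) * (exp b - 1) * real X / real Y)"
  proof -
    have "real k * (real k * real X) * D + real k * real X * D \<le> real (Suc k) * (real (Suc k) * real X) * D"
      using D0 by (simp add: algebra_simps)
    moreover have "- b * real k * real X + - b * real X = - b * real (Suc k) * real X"
      by (simp add: algebra_simps)
    ultimately have le: "(- b * real k * real X + - b * real X) + (real k * (real k * real X) * D + real k * real X * D)
       \<le> - b * real (Suc k) * real X + real (Suc k) * (real (Suc k) * real X) * D" by linarith
    have r: "real (Suc k) * (real (Suc k) * real X) * (exp b - 1) * real X / real Y = real (Suc k) * (real (Suc k) * real X) * D"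
      by (simp add: D_def)
    have "(exp (- b * real k * real X) * exp (real k * (real k * real X) * D)) * (exp (- b * real X) * exp (real k * real X * D))
       = exp ((- b * real k * real X + - b * real X) + (real k * (real k * real X) * D + real k * real X * D))"
      by (simp only: exp_add mult_ac)
    also have "\<dots> \<le> exp (- b * real (Suc k) * real X + real (Suc k) * (real (Suc k) * real X) * D)"
      using le by simp
    finally show ?thesis unfolding r by (simp only: exp_add)
  qed
  finally show ?case .
qed

lemma ratio_bound:
  assumes X1: "1 \<le> X" and XY: "X \<le> Y"
  shows "real ((Y-X) choose X) / real (Y choose X) \<le> exp (- (real X * real X) / real Y)"
proof (cases "X \<le> Y - X")
  case False
  then have c0: "(Y-X) choose X = 0" by (simp add: binomial_eq_0)
  show ?thesis unfolding c0 by simp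
next
  case True
  have Y0: "0 < real Y" using X1 XY by simp
  have "real ((Y-X) choose X) / real (Y choose X)
      = (\<Prod>i = 0..<X. real (Y - X - i) / real (X - i)) / (\<Prod>i = 0..<X. real (Y - i) / real (X - i))"
    using binomial_altdef_of_nat[OF True, where 'a=real] binomial_altdef_of_nat[OF XY, where 'a=real] by simp
  also have "\<dots> = (\<Prod>i = 0..<X. (real (Y - X - i) / real (X - i)) / (real (Y - i) / real (X - i)))"
    by (rule prod_dividef[symmetric])
  also have "\<dots> = (\<Prod>i = 0..<X. real (Y - X - i) / real (Y - i))"
    by (intro prod.cong refl) (auto simp: divide_simps)
  also have "\<dots> \<le> (\<Prod>i = 0..<X. 1 - real X / real Y)"
  proof (rule prod_mono)
    fix i assume i: "i \<in> {0..<X}"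
    have Yi: "0 < real (Y - i)" using i XY by simp
    have "real (Y - X - i) / real (Y - i) \<le> 1 - real X / real Y"
    proof -
      have e1: "real (Y - X - i) = real Y - real X - real i" using True i by (simp add: of_nat_diff)
      have e2: "real (Y - i) = real Y - real i" using i XY by (simp add: of_nat_diff)
      have "(real Y - real X - real i) * real Y \<le> (real Y - real X) * (real Y - real i)"
        using XY by (simp add: algebra_simps mult_right_mono)
      then show ?thesis using Yi Y0 e1 e2 by (simp add: divide_simps)
    qed
    then show "0 \<le> real (Y - X - i) / real (Y - i) \<and> real (Y - X - i) / real (Y - i) \<le> 1 - real X / real Y"
      by simp
  qed
  also have "\<dots> = (1 - real X / real Y) ^ X" by simp
  also have "\<dots> \<le> exp (- real X / real Y) ^ X"
  proof (rule power_mono)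
    show "1 - real X / real Y \<le> exp (- real X / real Y)"
      using exp_ge_add_one_self[of "- real X / real Y"] by simp
    show "0 \<le> 1 - real X / real Y" using XY Y0 by (simp add: divide_simps)
  qed
  also have "\<dots> = exp (real X * (- real X / real Y))" by (rule exp_of_nat_mult[symmetric])
  also have "\<dots> = exp (- (real X * real X) / real Y)" by (simp)
  finally show ?thesis .
qed

lemma edge_prob_nonneg:
  assumes "1 \<le> X" "X \<le> Y"
  shows "0 \<le> edge_prob X Y"
proof -
  have "real ((Y-X) choose X) / real (Y choose X) \<le> exp (- (real X * real X) / real Y)" by (rule ratio_bound[OF assms])
  also have "\<dots> \<le> 1" using assms by simp
  finally show ?thesis by (simp add: edge_prob_def)
qed

lemma sq_over_bound:
  assumes X1: "1 \<le> X" and XY: "X \<le> Y" and hq: "edge_prob X Y \<le> 1/2"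
  shows "(real X * real X) / real Y \<le> 2 * edge_prob X Y"
proof -
  define q where "q = edge_prob X Y"
  have q0: "0 \<le> q" using edge_prob_nonneg[OF X1 XY] by (simp add: q_def)
  have r: "real ((Y-X) choose X) / real (Y choose X) = 1 - q" by (simp add: q_def edge_prob_def)
  have "1 - q \<le> exp (- (real X * real X) / real Y)" using ratio_bound[OF X1 XY] r by simp
  then have "ln (1 - q) \<le> - (real X * real X) / real Y" using hq q_def ln_mono[of "1 - q" "exp (- (real X * real X) / real Y)"] by simp
  moreover have "- q - 2 * q^2 \<le> ln (1 - q)" using ln_one_minus_pos_lower_bound[of q] q0 hq q_def by simp
  moreover have "2 * q^2 \<le> q"
  proof -
    have "q * (2*q) \<le> q * 1" by (rule mult_left_mono) (use q0 hq q_def in auto)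
    then show ?thesis by (simp add: power2_eq_square mult.commute mult.left_commute)
  qed
  ultimately show ?thesis unfolding q_def by linarith
qed

theorem mainTheorem7:
  fixes m :: nat and X Y :: "nat \<Rightarrow> nat"
  assumes "m \<ge> 1"
    and "\<And>n. 1 \<le> X n \<and> X n \<le> Y n"
    and "eventually (\<lambda>n. X n \<ge> 2) at_top"
    and "(\<lambda>n. edge_prob (X n) (Y n)) \<sim>[at_top] (\<lambda>n. ln (real n) / real n)"
  shows "\<exists>h :: nat \<Rightarrow> real. h \<longlonglongrightarrow> 0 \<and>
     eventually (\<lambda>n.
       measure_pmf.expectation (key_rings_pmf m (X n) (Y n))
         (\<lambda>S. exp (- (real n * edge_prob (X n) (Y n) / real (X n)) * real (card (\<Union>i\<in>{1..m}. S i))))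
       \<le> exp (- real m * real n * edge_prob (X n) (Y n)) * (1 + h n)) at_top"
proof -
  define q where "q n = edge_prob (X n) (Y n)" for n
  define L where "L n = ln (real n) / real n" for n :: nat
  define h where "h n = exp (3 * real m ^ 2 * (ln (real n) / real n powr (1/4))) - 1" for n :: nat
  have h0: "h \<longlonglongrightarrow> 0"
  proof -
    have "(\<lambda>n::nat. ln (real n) / real n powr (1/4)) \<longlonglongrightarrow> 0" by real_asymp
    then have "(\<lambda>n::nat. 3 * real m ^ 2 * (ln (real n) / real n powr (1/4))) \<longlonglongrightarrow> 3 * real m ^ 2 * 0"
      by (intro tendsto_mult tendsto_const)
    then have "(\<lambda>n::nat. exp (3 * real m ^ 2 * (ln (real n) / real n powr (1/4)))) \<longlonglongrightarrow> exp (3 * real m ^ 2 * 0)"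
      by (rule tendsto_exp)
    then have "(\<lambda>n::nat. exp (3 * real m ^ 2 * (ln (real n) / real n powr (1/4))) - 1) \<longlonglongrightarrow> exp (3 * real m ^ 2 * 0) - 1"
      by (intro tendsto_diff tendsto_const)
    then show ?thesis unfolding h_def by simp
  qed
  have L0: "L \<longlonglongrightarrow> 0" unfolding L_def by real_asymp
  have evL: "eventually (\<lambda>n. L n < 1/3) at_top" using order_tendstoD(2)[OF L0, of "1/3"] by simp
  have evn: "eventually (\<lambda>n::nat. n > 1) at_top" by (rule eventually_gt_at_top)
  have "eventually (\<lambda>n. q n \<noteq> 0 \<or> L n \<noteq> 0) at_top"
    using evn by eventually_elim (simp add: L_def)
  then have "(\<lambda>n. q n / L n) \<longlonglongrightarrow> 1"
    using asymp_equivD_strong[OF assms(4)[folded q_def L_def]] by blast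
  then have evq: "eventually (\<lambda>n. q n / L n < 3/2) at_top"
    by (rule order_tendstoD(2)) simp
  show ?thesis
  proof (intro exI[of _ h] conjI h0)
    show "eventually (\<lambda>n.
       measure_pmf.expectation (key_rings_pmf m (X n) (Y n))
         (\<lambda>S. exp (- (real n * edge_prob (X n) (Y n) / real (X n)) * real (card (\<Union>i\<in>{1..m}. S i))))
       \<le> exp (- real m * real n * edge_prob (X n) (Y n)) * (1 + h n)) at_top"
      using evL evn evq assms(3)
    proof eventually_elim
      case (elim n)
      have X1: "1 \<le> X n" and XY: "X n \<le> Y n" using assms(2) by auto
      have n1: "1 < real n" using elim by simp
      have Lpos: "0 < L n" using n1 by (simp add: L_def)
      have qL: "q n < 3/2 * L n" using elim(3) Lpos by (simp add: divide_simps)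
      have q0: "0 \<le> q n" unfolding q_def by (rule edge_prob_nonneg[OF X1 XY])
      have qh: "q n \<le> 1/2" using qL elim(1) by linarith
      have sq: "real (X n) * real (X n) / real (Y n) \<le> 2 * q n"
        using sq_over_bound[OF X1 XY] qh by (simp add: q_def)
      define b where "b = real n * q n / real (X n)"
      have b0: "0 \<le> b" using q0 by (simp add: b_def)
      have X2: "2 \<le> real (X n)" using elim(4) by simp
      have "b \<le> real n * q n / 2" unfolding b_def
        by (rule divide_left_mono) (use X2 q0 in auto)
      also have "\<dots> \<le> real n * (3/2 * L n) / 2" using qL n1 by (intro divide_right_mono mult_left_mono) auto
      also have "\<dots> = 3/4 * ln (real n)" using n1 by (simp add: L_def)
      finally have bl: "b \<le> 3/4 * ln (real n)" .
      have eb: "exp b - 1 \<le> real n powr (3/4)"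
      proof -
        have "exp b \<le> exp (3/4 * ln (real n))" using bl by simp
        also have "\<dots> = real n powr (3/4)" using n1 by (simp add: powr_def)
        finally show ?thesis by simp
      qed
      have "real m * (real m * real (X n)) * (exp b - 1) * real (X n) / real (Y n)
          = real m ^ 2 * (real (X n) * real (X n) / real (Y n)) * (exp b - 1)"
        by (simp add: power2_eq_square algebra_simps)
      also have "\<dots> \<le> real m ^ 2 * (3 * L n) * real n powr (3/4)"
      proof (intro mult_mono mult_left_mono)
        show "real (X n) * real (X n) / real (Y n) \<le> 3 * L n" using sq qL by linarith
      qed (use b0 Lpos eb in auto)
      also have "\<dots> = 3 * real m ^ 2 * (ln (real n) / real n powr (1/4))"
      proof -
        have "real n = real n powr (1/4) * real n powr (3/4)"
          using n1 by (simp flip: powr_add)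
        then have "L n * real n powr (3/4) = ln (real n) / real n powr (1/4)"
          using n1 unfolding L_def by (simp add: divide_simps) (metis mult.commute)
        moreover have "real m ^ 2 * (3 * L n) * real n powr (3/4) = 3 * real m ^ 2 * (L n * real n powr (3/4))"
          by (simp only: mult_ac)
        ultimately show ?thesis by simp
      qed
      finally have expo: "real m * (real m * real (X n)) * (exp b - 1) * real (X n) / real (Y n)
          \<le> 3 * real m ^ 2 * (ln (real n) / real n powr (1/4))" .
      have e1: "- b * real m * real (X n) = - real m * real n * q n"
        using X1 by (simp add: b_def)
      have "measure_pmf.expectation (key_rings_pmf m (X n) (Y n))
         (\<lambda>S. exp (- (real n * edge_prob (X n) (Y n) / real (X n)) * real (card (\<Union>i\<in>{1..m}. S i))))
         \<le> exp (- b * real m * real (X n)) * exp (real m * (real m * real (X n)) * (exp b - 1) * real (X n) / real (Y n))"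
        using union_bound[OF X1 XY b0, of m] by (simp add: b_def q_def)
      also have "\<dots> \<le> exp (- real m * real n * q n) * (1 + h n)"
        unfolding e1 h_def using expo by simp
      finally show ?case by (simp add: q_def)
    qed
  qed
qed

end
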